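(* Let $d,N,m$ be positive integers with $m\ge d$. Let $X\in\mathbb{R}^{d\times m}$ satisfy $XX^T=I_d$. Consider the two-layer linear network $f(x)=W_2W_1x$ with $W_1\in\mathbb{R}^{N\times d}$, $W_2\in\mathbb{R}^{1\times N}$, and targets $Y=\beta^TX$ for some $\beta\in\mathbb{R}^d\setminus\{0\}$, $\hat\beta=\beta/\|\beta\|$. Let $0<\sigma\ll1$, let $\|W_2^{(0)}\|_F=\sigma$, and take the rank-one initialization $W_1^{(0)}\in\mathbb{R}^{N\times d}$ whose first row is $\sigma\hat\beta^T$ and whose other rows are zero. With initial NTK $K^{(0)}=X^T\big(W_1^{(0)T}W_1^{(0)}+\|W_2^{(0)}\|^2I_d\big)X$ and final NTK $K^{(f)}=\|\beta\|\,X^T(\hat\beta\hat\beta^T+I_d)X+O(\sigma^2)$, one has $\mathrm{KA}(K^{(f)},K^{(0)})=1+O(\sigma^2)$.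
   Context: $\mathrm{KA}(K^{(f)},K^{(0)})=\dfrac{\operatorname{Tr}(K^{(f)}K^{(0)})}{\|K^{(f)}\|_F\,\|K^{(0)}\|_F}$. The expression for $K^{(f)}$ is the asymptotic neural tangent kernel after training this network by gradient flow on the mean squared error from small initialization, taken as given. *)

theory Defs
  imports "HOL-Analysis.Analysis" "HOL-Library.Landau_Symbols"
begin

definition frob_norm :: "real^'c^'r \<Rightarrow> real" where
  "frob_norm A = sqrt (\<Sum>i\<in>UNIV. \<Sum>j\<in>UNIV. (A $ i $ j)^2)"

definition kernel_alignment :: "real^'m^'m \<Rightarrow> real^'m^'m \<Rightarrow> real" where
  "kernel_alignment K1 K2 = trace (K1 ** K2) / (frob_norm K1 * frob_norm K2)"

definition outer :: "real^'a \<Rightarrow> real^'b \<Rightarrow> real^'b^'a" where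
  "outer u v = (\<chi> i j. u $ i * v $ j)"

end

theory Submission
  imports Defs
begin

lemma frob_eq_norm: "frob_norm (A::real^'c^'r) = norm A"
  unfolding frob_norm_def norm_vec_def L2_set_def by (simp add: power2_abs sum_nonneg)

lemma trace_eq_inner: "trace ((A::real^'m^'m) ** B) = inner A (transpose B)"
  by (simp add: trace_def inner_vec_def matrix_matrix_mult_def transpose_def)

lemma transpose_add': "transpose ((A::real^'a^'b) + B) = transpose A + transpose B"
  by (simp add: transpose_def vec_eq_iff)

lemma transpose_outer: "transpose (outer u u) = outer (u::real^'a) u"
  by (simp add: transpose_def outer_def vec_eq_iff mult.commute)

lemma W1_prod:
  fixes bh :: "real^'d" and i1 :: "'n::finite"
  shows "transpose ((\<chi> i. if i = i1 then s *\<^sub>R bh else 0) :: real^'d^'n) **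
     ((\<chi> i. if i = i1 then s *\<^sub>R bh else 0) :: real^'d^'n) = s^2 *\<^sub>R outer bh bh"
  by (simp add: matrix_matrix_mult_def transpose_def outer_def vec_eq_iff if_distrib
      if_distribR power2_eq_square mult_ac cong: if_cong)

lemma key:
  fixes K M E :: "'a::real_inner"
  assumes "M \<noteq> 0" "c > 0" "K = c *\<^sub>R M + E" "norm E \<le> c * norm M / 2"
  shows "\<bar>inner K M / (norm K * norm M) - 1\<bar> \<le> 4 / (c * norm M) * norm E"
proof -
  define m where "m = norm M"
  define e where "e = norm E"
  have m0: "m > 0" using assms(1) by (simp add: m_def)
  have iK: "inner K M = c * m^2 + inner E M"
    using assms(3) by (simp add: m_def inner_add_left power2_norm_eq_inner)
  have iE: "\<bar>inner E M\<bar> \<le> e * m" unfolding e_def m_def by (rule Cauchy_Schwarz_ineq2)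
  have nK1: "norm K \<le> c * m + e" using assms(3) norm_triangle_ineq[of "c *\<^sub>R M" E] assms(2)
    by (simp add: m_def e_def)
  have nK2: "norm K \<ge> c * m - e" using assms(3) norm_triangle_ineq2[of "c *\<^sub>R M" "-E"] assms(2)
    by (simp add: m_def e_def)
  have ee: "e \<le> c * m / 2" using assms(4) by (simp add: m_def e_def)
  have nKp: "norm K \<ge> c * m / 2" using nK2 ee by linarith
  have cm: "c * m > 0" using assms(2) m0 by simp
  have nKpos0: "norm K > 0" using nKp cm by linarith
  have nKpos: "norm K * m > 0" using nKpos0 m0 by simp
  have "inner K M / (norm K * m) - 1 = (c * m^2 + inner E M - norm K * m) / (norm K * m)"
    using nKpos iK nKpos0 m0 by (simp add: diff_divide_distrib add.commute)
  hence "\<bar>inner K M / (norm K * m) - 1\<bar> = \<bar>c * m^2 + inner E M - norm K * m\<bar> / (norm K * m)"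
    using nKpos by simp
  also have "\<dots> \<le> (2 * e * m) / (norm K * m)"
  proof (rule divide_right_mono)
    have "\<bar>c * m^2 - norm K * m\<bar> \<le> e * m"
    proof -
      have "c * m^2 - norm K * m = (c*m - norm K) * m" by (simp add: power2_eq_square algebra_simps)
      moreover have "\<bar>c*m - norm K\<bar> \<le> e" using nK1 nK2 by linarith
      ultimately show ?thesis using m0 by (simp add: abs_mult mult_right_mono)
    qed
    thus "\<bar>c * m^2 + inner E M - norm K * m\<bar> \<le> 2 * e * m" using iE by linarith
  qed (use nKpos in simp)
  also have "\<dots> \<le> (2 * e * m) / (c * m / 2 * m)"
    apply (rule divide_left_mono)
    using nKp m0 cm e_def by (auto intro!: mult_right_mono mult_pos_pos)
  also have "\<dots> = 4 / (c * m) * e" using m0 assms(2) by (simp add: field_simps)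
  finally show ?thesis by (simp add: m_def e_def)
qed


theorem proposition1:
  fixes X :: "real^'m^'d"
    and \<beta> :: "real^'d"
    and i1 :: "'n::finite"
    and W2 :: "real \<Rightarrow> real^'n"
    and Kf :: "real \<Rightarrow> real^'m^'m"
  assumes "CARD('d) \<le> CARD('m)"
    and "X ** transpose X = mat 1"
    and "\<beta> \<noteq> 0"
    and "\<And>\<sigma>. \<sigma> > 0 \<Longrightarrow> norm (W2 \<sigma>) = \<sigma>"
    and "(\<lambda>\<sigma>. frob_norm (Kf \<sigma> - norm \<beta> *\<^sub>R
            (transpose X ** (outer (\<beta> /\<^sub>R norm \<beta>) (\<beta> /\<^sub>R norm \<beta>) + mat 1) ** X)))
          \<in> O[at_right 0](\<lambda>\<sigma>. \<sigma>^2)"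
  shows "(let \<beta>h = \<beta> /\<^sub>R norm \<beta>;
              W1 = (\<lambda>\<sigma>::real. (\<chi> i. if i = i1 then \<sigma> *\<^sub>R \<beta>h else 0) :: real^'d^'n);
              K0 = (\<lambda>\<sigma>. transpose X ** (transpose (W1 \<sigma>) ** W1 \<sigma> + (norm (W2 \<sigma>))^2 *\<^sub>R mat 1) ** X)
          in (\<lambda>\<sigma>. kernel_alignment (Kf \<sigma>) (K0 \<sigma>) - 1) \<in> O[at_right 0](\<lambda>\<sigma>. \<sigma>^2))"
proof -
  define bh where "bh = \<beta> /\<^sub>R norm \<beta>"
  define Q where "Q = outer bh bh + mat 1"
  define M where "M = transpose X ** Q ** X"
  define c where "c = norm \<beta>"
  have c0: "c > 0" using assms(3) by (simp add: c_def)
  have QT: "transpose Q = Q" by (simp add: Q_def transpose_add' transpose_outer)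
  have MT: "transpose M = M"
    by (simp add: M_def matrix_transpose_mul QT matrix_mul_assoc)
  have M0: "M \<noteq> 0"
  proof
    assume "M = 0"
    hence "X ** M ** transpose X = 0" by simp
    moreover have "X ** M ** transpose X = (X ** transpose X) ** Q ** (X ** transpose X)"
      by (simp add: M_def matrix_mul_assoc)
    hence "X ** M ** transpose X = Q" using assms(2) by simp
    ultimately have "Q = 0" by simp
    then have "Q $ i $ i = 0" for i by simp
    moreover have "Q $ i $ i > 0" for i
      by (simp add: Q_def outer_def mat_def add_nonneg_pos)
    ultimately show False by (metis less_irrefl)
  qed
  have mpos: "norm M > 0" using M0 by simp
  define E where "E = (\<lambda>\<sigma>. Kf \<sigma> - c *\<^sub>R M)"
  have Ebig: "(\<lambda>\<sigma>. norm (E \<sigma>)) \<in> O[at_right 0](\<lambda>\<sigma>. \<sigma>^2)"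
    using assms(5) by (simp add: E_def c_def M_def Q_def bh_def frob_eq_norm)
  then obtain C where C0: "C > 0" and
    Cev: "eventually (\<lambda>\<sigma>. norm (norm (E \<sigma>)) \<le> C * norm (\<sigma>^2)) (at_right (0::real))"
    by (elim landau_o.bigE)
  have lim: "((\<lambda>\<sigma>::real. C * \<sigma>^2) \<longlongrightarrow> 0) (at_right 0)"
    by (auto intro!: tendsto_eq_intros)
  have "eventually (\<lambda>\<sigma>. C * \<sigma>^2 < c * norm M / 2) (at_right (0::real))"
  proof -
    have "c * norm M / 2 > 0" using c0 mpos by simp
    thus ?thesis by (rule order_tendstoD(2)[OF lim])
  qed
  moreover note Cev
  moreover have "eventually (\<lambda>\<sigma>. 0 < \<sigma>) (at_right (0::real))"
    by (rule eventually_at_right_less)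
  ultimately have ev: "eventually (\<lambda>\<sigma>. norm (kernel_alignment (Kf \<sigma>)
      (transpose X ** (transpose ((\<chi> i. if i = i1 then \<sigma> *\<^sub>R bh else 0) :: real^'d^'n) **
        ((\<chi> i. if i = i1 then \<sigma> *\<^sub>R bh else 0) :: real^'d^'n) + (norm (W2 \<sigma>))^2 *\<^sub>R mat 1) ** X) - 1)
      \<le> (4 / (c * norm M) * C) * norm (\<sigma>^2)) (at_right (0::real))"
  proof eventually_elim
    case (elim \<sigma>)
    have K0: "transpose X ** (transpose ((\<chi> i. if i = i1 then \<sigma> *\<^sub>R bh else 0) :: real^'d^'n) **
        ((\<chi> i. if i = i1 then \<sigma> *\<^sub>R bh else 0) :: real^'d^'n) + (norm (W2 \<sigma>))^2 *\<^sub>R mat 1) ** X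
        = \<sigma>^2 *\<^sub>R M"
      using elim(3) assms(4)[of \<sigma>]
      by (simp add: W1_prod M_def Q_def scaleR_right_distrib[symmetric] matrix_scalar_ac
          scalar_matrix_assoc[symmetric])
    have s2: "\<sigma>^2 > 0" using elim(3) by simp
    have KA: "kernel_alignment (Kf \<sigma>) (\<sigma>^2 *\<^sub>R M) = inner (Kf \<sigma>) M / (norm (Kf \<sigma>) * norm M)"
      using s2 by (simp add: kernel_alignment_def trace_eq_inner frob_eq_norm transpose_scalar MT)
    have eE: "norm (E \<sigma>) \<le> c * norm M / 2" using elim(1,2) by simp
    have "\<bar>inner (Kf \<sigma>) M / (norm (Kf \<sigma>) * norm M) - 1\<bar> \<le> 4 / (c * norm M) * norm (E \<sigma>)"
      by (rule key[OF M0 c0 _ eE]) (simp add: E_def)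
    also have "\<dots> \<le> 4 / (c * norm M) * (C * \<sigma>^2)"
      using elim(2) c0 mpos by (intro mult_left_mono) auto
    finally show ?case using K0 KA by simp
  qed
  show ?thesis
    unfolding Let_def bh_def[symmetric]
    by (rule bigoI[OF ev])
qed

end
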